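(* Assume the setting below and suppose $\tau\le0$ and $|x_k^{(1)}|>a$. Define $r_k=\lceil\log_2(|x_k^{(1)}|/a)\rceil$. Then (with probability one) the step returned by the bracketing line search at iteration $k$ is $t_k=2^{r_k}$.
   Context: Let $n\ge2$, $a\ge\sqrt{n-1}$, $f(x)=a|x^{(1)}|+\sum_{i=2}^n x^{(i)}$ on $\mathbb{R}^n$ ($x^{(i)}$ the $i$-th coordinate), $0<c_1<c_2<1$, and $\tau=c_1+\frac{(n-1)(c_1-1)}{a^2}$. The initial point $x_0$ is drawn from the normal distribution on $\mathbb{R}^n$ (independently of $a$), and $x_{k+1}=x_k+t_kd_k$, $d_k=-\nabla f(x_k)$, where $t_k$ is returned by the following Armijo–Wolfe bracketing line search: set $\alpha=0$, $\beta=+\infty$, $t=1$; repeat: if $A(t)$ fails set $\beta\leftarrow t$; else if $W(t)$ fails set $\alpha\leftarrow t$; else stop and return $t$; then if $\beta<+\infty$ set $t\leftarrow(\alpha+\beta)/2$, otherwise $t\leftarrow2\alpha$. Here $A(t)$: $f(x_k+td_k)\le f(x_k)+c_1t\nabla f(x_k)^Td_k$, and $W(t)$: $f$ is differentiable at $x_k+td_k$ and $\nabla f(x_k+td_k)^Td_k\ge c_2\nabla f(x_k)^Td_k$. All statements are understood to hold with probability one. *)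

theory Defs
  imports "HOL-Probability.Probability"
begin

text \<open>The objective: coordinate i1 plays the role of the first coordinate.\<close>
definition fobj :: "real \<Rightarrow> 'n::finite \<Rightarrow> real ^ 'n \<Rightarrow> real" where
  "fobj a i1 x = a * \<bar>x $ i1\<bar> + (\<Sum>i\<in>UNIV - {i1}. x $ i)"

definition has_grad :: "(real ^ 'n::finite \<Rightarrow> real) \<Rightarrow> real ^ 'n \<Rightarrow> real ^ 'n \<Rightarrow> bool" where
  "has_grad f g x \<longleftrightarrow> (f has_derivative (\<lambda>h. g \<bullet> h)) (at x)"

definition grad :: "(real ^ 'n::finite \<Rightarrow> real) \<Rightarrow> real ^ 'n \<Rightarrow> real ^ 'n" where
  "grad f x = (THE g. has_grad f g x)"

definition armijo :: "(real ^ 'n::finite \<Rightarrow> real) \<Rightarrow> real \<Rightarrow> real ^ 'n \<Rightarrow> real ^ 'n \<Rightarrow> real \<Rightarrow> bool" where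
  "armijo f c1 x d t \<longleftrightarrow> f (x + t *\<^sub>R d) \<le> f x + c1 * t * (grad f x \<bullet> d)"

definition wolfe :: "(real ^ 'n::finite \<Rightarrow> real) \<Rightarrow> real \<Rightarrow> real ^ 'n \<Rightarrow> real ^ 'n \<Rightarrow> real \<Rightarrow> bool" where
  "wolfe f c2 x d t \<longleftrightarrow> (\<exists>g. has_grad f g (x + t *\<^sub>R d) \<and> g \<bullet> d \<ge> c2 * (grad f x \<bullet> d))"

text \<open>One pass of the bracketing loop on state (alpha, beta, t); beta = None encodes +infinity.
  Only used while the stopping test fails.\<close>
definition ls_step :: "(real ^ 'n::finite \<Rightarrow> real) \<Rightarrow> real \<Rightarrow> real \<Rightarrow> real ^ 'n \<Rightarrow> real ^ 'n
    \<Rightarrow> real \<times> real option \<times> real \<Rightarrow> real \<times> real option \<times> real" where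
  "ls_step f c1 c2 x d s =
     (case s of (\<alpha>, \<beta>, t) \<Rightarrow>
       (let (\<alpha>', \<beta>') = (if \<not> armijo f c1 x d t then (\<alpha>, Some t)
                         else if \<not> wolfe f c2 x d t then (t, \<beta>) else (\<alpha>, \<beta>))
        in (\<alpha>', \<beta>', (case \<beta>' of Some b \<Rightarrow> (\<alpha>' + b) / 2 | None \<Rightarrow> 2 * \<alpha>'))))"

definition ls_trial :: "(real ^ 'n::finite \<Rightarrow> real) \<Rightarrow> real \<Rightarrow> real \<Rightarrow> real ^ 'n \<Rightarrow> real ^ 'n \<Rightarrow> nat \<Rightarrow> real" where
  "ls_trial f c1 c2 x d j = snd (snd ((ls_step f c1 c2 x d ^^ j) (0, None, 1)))"

definition ls_returns :: "(real ^ 'n::finite \<Rightarrow> real) \<Rightarrow> real \<Rightarrow> real \<Rightarrow> real ^ 'n \<Rightarrow> real ^ 'n \<Rightarrow> real \<Rightarrow> bool" where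
  "ls_returns f c1 c2 x d t \<longleftrightarrow>
     (\<exists>j. ls_trial f c1 c2 x d j = t \<and> armijo f c1 x d t \<and> wolfe f c2 x d t \<and>
          (\<forall>i<j. \<not> (armijo f c1 x d (ls_trial f c1 c2 x d i) \<and> wolfe f c2 x d (ls_trial f c1 c2 x d i))))"

definition gd_upto :: "(real ^ 'n::finite \<Rightarrow> real) \<Rightarrow> real \<Rightarrow> real \<Rightarrow> real ^ 'n
    \<Rightarrow> (nat \<Rightarrow> real ^ 'n) \<Rightarrow> (nat \<Rightarrow> real) \<Rightarrow> nat \<Rightarrow> bool" where
  "gd_upto f c1 c2 x0 xs ts k \<longleftrightarrow> xs 0 = x0 \<and>
     (\<forall>j<k. f differentiable (at (xs j)) \<and>
            ls_returns f c1 c2 (xs j) (- grad f (xs j)) (ts j) \<and>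
            xs (Suc j) = xs j + ts j *\<^sub>R (- grad f (xs j)))"

definition std_gauss :: "(real ^ 'n::finite) measure" where
  "std_gauss = density lborel
     (\<lambda>x. ennreal ((2 * pi) powr (- real CARD('n) / 2) * exp (- (norm x)\<^sup>2 / 2)))"

end

theory Submission
  imports Defs
begin

definition GG :: "real \<Rightarrow> 'n::finite \<Rightarrow> real ^ 'n \<Rightarrow> real ^ 'n" where
  "GG a i1 p = (\<chi> i. if i = i1 then a * sgn (p $ i1) else 1)"

lemma inner_GG: "GG a i1 q \<bullet> v = a * sgn (q $ i1) * v $ i1 + (\<Sum>i\<in>UNIV - {i1}. v $ i)"
proof -
  have "GG a i1 q \<bullet> v = (\<Sum>i\<in>UNIV. GG a i1 q $ i * v $ i)" by (simp add: inner_vec_def)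
  also have "\<dots> = GG a i1 q $ i1 * v $ i1 + (\<Sum>i\<in>UNIV - {i1}. GG a i1 q $ i * v $ i)"
    by (simp add: sum.remove)
  also have "(\<Sum>i\<in>UNIV - {i1}. GG a i1 q $ i * v $ i) = (\<Sum>i\<in>UNIV - {i1}. v $ i)"
    by (rule sum.cong) (auto simp: GG_def)
  finally show ?thesis by (simp add: GG_def)
qed

lemma has_grad_GG:
  fixes p :: "real^'n::finite"
  assumes "p $ i1 \<noteq> 0"
  shows "has_grad (fobj a i1) (GG a i1 p) p"
proof -
  let ?s = "sgn (p $ i1)"
  have d: "((\<lambda>y. GG a i1 p \<bullet> y) has_derivative (\<lambda>h. GG a i1 p \<bullet> h)) (at p)"
    by (auto intro!: derivative_eq_intros)
  have op: "open {y::real^'n. 0 < ?s * y $ i1}"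
    by (rule open_Collect_less) (auto intro!: continuous_intros)
  have mem: "p \<in> {y. 0 < ?s * y $ i1}" using assms
    by (auto simp: sgn_if)
  have eq: "GG a i1 p \<bullet> y = fobj a i1 y" if "y \<in> {y. 0 < ?s * y $ i1}" for y
  proof -
    have "\<bar>y $ i1\<bar> = ?s * y $ i1" using that assms by (auto simp: sgn_if split: if_splits)
    then show ?thesis by (simp add: inner_GG fobj_def)
  qed
  show ?thesis unfolding has_grad_def
    by (rule has_derivative_transform_within_open[OF d op mem eq])
qed

lemma has_grad_unique:
  assumes "has_grad f g p" "has_grad f g' p" shows "g = g'"
proof -
  have "(\<lambda>h. g \<bullet> h) = (\<lambda>h. g' \<bullet> h)"
    using assms unfolding has_grad_def by (rule has_derivative_unique)
  then have "\<And>i. g \<bullet> axis i 1 = g' \<bullet> axis i 1" by metis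
  then show ?thesis by (simp add: vec_eq_iff cart_eq_inner_axis)
qed

lemma grad_GG:
  assumes "p $ i1 \<noteq> 0"
  shows "grad (fobj a i1) p = GG a i1 p"
  unfolding grad_def
  by (rule the_equality) (use has_grad_GG[OF assms] has_grad_unique in blast)+

lemma not_diff:
  fixes p :: "real^'n::finite"
  assumes a: "a > 0" and p: "p $ i1 = 0"
  shows "\<not> fobj a i1 differentiable (at p)"
proof
  assume "fobj a i1 differentiable (at p)"
  then obtain L where L: "(fobj a i1 has_derivative L) (at p)"
    by (auto simp: differentiable_def)
  define e :: "real^'n" where "e = axis i1 1"
  have g: "((\<lambda>h::real. p + h *\<^sub>R e) has_derivative (\<lambda>h. h *\<^sub>R e)) (at 0)"
    by (auto intro!: derivative_eq_intros)
  have L0: "(fobj a i1 has_derivative L) (at (p + 0 *\<^sub>R e))" using L by simp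
  have c: "((\<lambda>h. fobj a i1 (p + h *\<^sub>R e)) has_derivative (\<lambda>h. L (h *\<^sub>R e))) (at 0)"
    using has_derivative_compose[OF g L0] by simp
  have bl: "linear L" using L has_derivative_linear by blast
  define c0 where "c0 = (\<Sum>i\<in>UNIV - {i1}. p $ i)"
  have fe: "fobj a i1 (p + h *\<^sub>R e) = a * \<bar>h\<bar> + c0" for h
  proof -
    have "(\<Sum>i\<in>UNIV - {i1}. (p + h *\<^sub>R e) $ i) = c0"
      unfolding c0_def by (rule sum.cong) (auto simp: e_def axis_def)
    then show ?thesis using p by (simp add: fobj_def e_def axis_def)
  qed
  have D1: "((\<lambda>h. a * \<bar>h\<bar> + c0) has_field_derivative L e) (at 0)"
    apply (rule has_derivative_imp_has_field_derivative)
    using c fe apply simp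
    using linear_scale[OF bl] by (simp add: mult.commute)
  have "L e = 0"
    by (rule DERIV_local_min[OF D1, of 1]) (use a in auto)
  have D2: "((\<lambda>h. a * \<bar>h\<bar> + c0 - a * h) has_field_derivative L e - a) (at 0)"
    using DERIV_diff[OF D1 DERIV_cmult_Id[of a 0]] by simp
  have "L e - a = 0"
    by (rule DERIV_local_min[OF D2, of 1]) (use a in \<open>auto simp: abs_if mult_le_0_iff\<close>)
  with \<open>L e = 0\<close> a show False by simp
qed

lemma line_facts:
  fixes x :: "real^'n::finite"
  assumes a: "a > 0" and c: "0 < c1" "c1 < c2" "c2 < 1"
    and am: "a^2 \<ge> real CARD('n) - 1"
    and tau: "c1 * a^2 + (real CARD('n) - 1) * (c1 - 1) \<le> 0"
    and u: "\<bar>x $ i1\<bar> > a"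
  shows "\<And>t. 0 \<le> t \<Longrightarrow> t < \<bar>x $ i1\<bar> / a \<Longrightarrow>
            armijo (fobj a i1) c1 x (- grad (fobj a i1) x) t \<and> \<not> wolfe (fobj a i1) c2 x (- grad (fobj a i1) x) t"
    and "\<And>t. \<bar>x $ i1\<bar> / a < t \<Longrightarrow> t < 2 * (\<bar>x $ i1\<bar> / a) \<Longrightarrow>
            armijo (fobj a i1) c1 x (- grad (fobj a i1) x) t \<and> wolfe (fobj a i1) c2 x (- grad (fobj a i1) x) t"
proof -
  define u where "u = x $ i1"
  define s where "s = sgn u"
  define m where "m = real CARD('n) - 1"
  define K where "K = a^2 + m"
  define d where "d = - GG a i1 x"
  define S where "S = (\<Sum>i\<in>UNIV - {i1}. x $ i)"
  have u0: "u \<noteq> 0" using u a unfolding u_def by auto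
  have s2: "s * s = 1" using u0 unfolding s_def by (auto simp: sgn_if)
  have us: "u = s * \<bar>u\<bar>" unfolding s_def by (simp add: sgn_mult_abs)
  have gr: "grad (fobj a i1) x = GG a i1 x" using grad_GG u0 unfolding u_def by blast
  have card: "real (card (UNIV - {i1})) = m"
    unfolding m_def by (simp add: card_Diff_singleton)
  have m0: "m \<ge> 0" unfolding m_def by simp
  have K0: "K > 0" unfolding K_def using m0 a by (simp add: add_pos_nonneg)
  have sumc: "(\<Sum>i\<in>UNIV - {i1}. (c::real)) = m * c" for c using card by simp
  have fx: "fobj a i1 x = a * \<bar>u\<bar> + S" unfolding fobj_def u_def S_def by simp
  have yi1: "(x + t *\<^sub>R d) $ i1 = s * (\<bar>u\<bar> - t * a)" for t
    using us by (simp add: d_def GG_def s_def[symmetric] u_def[symmetric] algebra_simps)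
  have fy: "fobj a i1 (x + t *\<^sub>R d) = a * \<bar>\<bar>u\<bar> - t * a\<bar> + S - t * m" for t
  proof -
    have "(\<Sum>i\<in>UNIV - {i1}. (x + t *\<^sub>R d) $ i) = (\<Sum>i\<in>UNIV - {i1}. x $ i - t)"
      by (rule sum.cong) (auto simp: d_def GG_def)
    also have "\<dots> = S - t * m" using sumc[of t] by (simp add: sum_subtractf S_def)
    finally have 1: "(\<Sum>i\<in>UNIV - {i1}. (x + t *\<^sub>R d) $ i) = S - t * m" .
    have "\<bar>s * (\<bar>u\<bar> - t * a)\<bar> = \<bar>\<bar>u\<bar> - t * a\<bar>"
      using u0 by (simp add: abs_mult s_def)
    then show ?thesis unfolding fobj_def using 1 yi1 by simp
  qed
  have gd: "grad (fobj a i1) x \<bullet> d = - K"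
  proof -
    have "GG a i1 x \<bullet> d = a * s * (- (a * s)) + (\<Sum>i\<in>UNIV - {i1}. -1)"
      unfolding inner_GG by (simp add: d_def GG_def s_def u_def)
    also have "\<dots> = - K" using s2 sumc[of "-1"] by (simp add: K_def power2_eq_square algebra_simps)
    finally show ?thesis using gr by simp
  qed
  have ss: "sgn (s * w) * s = sgn w" for w
  proof -
    have "sgn (s * w) * s = sgn w * (s * s)" by (simp add: sgn_mult s_def)
    then show ?thesis using s2 by simp
  qed
  have wolfe_iff: "wolfe (fobj a i1) c2 x d t \<longleftrightarrow> - (a^2) * sgn (\<bar>u\<bar> - t * a) - m \<ge> - c2 * K"
    if t: "t * a \<noteq> \<bar>u\<bar>" for t
  proof -
    have ne: "(x + t *\<^sub>R d) $ i1 \<noteq> 0" using yi1 t u0 s2 by auto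
    have "GG a i1 (x + t *\<^sub>R d) \<bullet> d = a * sgn (s * (\<bar>u\<bar> - t * a)) * (- (a * s)) + (\<Sum>i\<in>UNIV - {i1}. -1)"
      unfolding inner_GG yi1 by (simp add: d_def GG_def s_def u_def)
    also have "\<dots> = - (a^2) * (sgn (s * (\<bar>u\<bar> - t * a)) * s) - m"
      using sumc[of "-1"] by (simp add: power2_eq_square algebra_simps)
    also have "\<dots> = - (a^2) * sgn (\<bar>u\<bar> - t * a) - m" by (simp only: ss)
    finally have e: "GG a i1 (x + t *\<^sub>R d) \<bullet> d = - (a^2) * sgn (\<bar>u\<bar> - t * a) - m" .
    have "wolfe (fobj a i1) c2 x d t \<longleftrightarrow> GG a i1 (x + t *\<^sub>R d) \<bullet> d \<ge> c2 * (grad (fobj a i1) x \<bullet> d)"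
      unfolding wolfe_def using has_grad_GG[OF ne] has_grad_unique by blast
    then show ?thesis using e gd by simp
  qed
  have arm_iff: "armijo (fobj a i1) c1 x d t \<longleftrightarrow> a * \<bar>\<bar>u\<bar> - t * a\<bar> - t * m \<le> a * \<bar>u\<bar> - c1 * t * K" for t
    unfolding armijo_def fy fx gd by auto
  have dd: "- grad (fobj a i1) x = d" using gr d_def by simp
  show "armijo (fobj a i1) c1 x (- grad (fobj a i1) x) t \<and> \<not> wolfe (fobj a i1) c2 x (- grad (fobj a i1) x) t"
    if "0 \<le> t" "t < \<bar>x $ i1\<bar> / a" for t
  proof -
    have lt: "t * a < \<bar>u\<bar>" using that a unfolding u_def by (simp add: pos_less_divide_eq)
    have "a * \<bar>\<bar>u\<bar> - t * a\<bar> - t * m = a * \<bar>u\<bar> - t * K" using lt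
      by (simp add: K_def power2_eq_square algebra_simps)
    moreover have "t * K * (1 - c1) \<ge> 0" using that K0 c by simp
    ultimately have A: "armijo (fobj a i1) c1 x d t" unfolding arm_iff by (simp add: algebra_simps)
    have "\<not> wolfe (fobj a i1) c2 x d t"
    proof -
      have "sgn (\<bar>u\<bar> - t * a) = 1" using lt by simp
      moreover have "c2 * K < K" using c K0 by simp
      ultimately show ?thesis using lt by (subst wolfe_iff) (auto simp: K_def)
    qed
    then show ?thesis using A dd by simp
  qed
  show "armijo (fobj a i1) c1 x (- grad (fobj a i1) x) t \<and> wolfe (fobj a i1) c2 x (- grad (fobj a i1) x) t"
    if "\<bar>x $ i1\<bar> / a < t" "t < 2 * (\<bar>x $ i1\<bar> / a)" for t
  proof -
    have gt: "\<bar>u\<bar> < t * a" using that a unfolding u_def by (simp add: pos_divide_less_eq)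
    have lt2: "t * a < 2 * \<bar>u\<bar>" using that a unfolding u_def by (simp add: pos_less_divide_eq mult.commute)
    have t0: "t > 0" using that a u0 unfolding u_def by (smt (verit) divide_pos_pos zero_less_abs_iff)
    have e: "a * \<bar>\<bar>u\<bar> - t * a\<bar> - t * m = t * a^2 - a * \<bar>u\<bar> - t * m" using gt
      by (simp add: power2_eq_square algebra_simps)
    have tau': "c1 * a^2 + c1 * m - m \<le> 0" using tau unfolding m_def by (simp add: algebra_simps)
    have "t * (c1 * a^2 + c1 * m - m) \<le> 0" using t0 tau' by (simp add: mult_nonneg_nonpos)
    moreover have "t * a^2 < 2 * a * \<bar>u\<bar>" using lt2 a
      by (metis mult.commute mult.left_commute mult_strict_left_mono power2_eq_square)
    ultimately have A: "armijo (fobj a i1) c1 x d t" unfolding arm_iff e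
      by (simp add: K_def algebra_simps)
    have W: "wolfe (fobj a i1) c2 x d t"
    proof -
      have "sgn (\<bar>u\<bar> - t * a) = -1" using gt by simp
      moreover have "a^2 - m \<ge> 0" using am unfolding m_def by simp
      moreover have "c2 * K \<ge> 0" using c K0 by simp
      ultimately show ?thesis using gt by (subst wolfe_iff) auto
    qed
    show ?thesis using A W dd by simp
  qed
qed

lemma ls_iter:
  assumes "\<forall>j<r. armijo f c1 x d (2^j) \<and> \<not> wolfe f c2 x d (2^j)"
  shows "j \<le> r \<Longrightarrow> \<exists>\<alpha>. (ls_step f c1 c2 x d ^^ j) (0, None, 1) = (\<alpha>, None, 2^j)"
proof (induction j)
  case 0
  then show ?case by simp
next
  case (Suc j)
  then obtain \<alpha> where e: "(ls_step f c1 c2 x d ^^ j) (0, None, 1) = (\<alpha>, None, 2^j)" by auto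
  have "armijo f c1 x d (2^j) \<and> \<not> wolfe f c2 x d (2^j)" using assms Suc.prems by auto
  then have "ls_step f c1 c2 x d (\<alpha>, None, 2^j) = (2^j, None, 2 * 2^j)"
    by (simp add: ls_step_def)
  then show ?case using e by simp
qed

lemma ls_ret:
  assumes "\<forall>j<r. armijo f c1 x d (2^j) \<and> \<not> wolfe f c2 x d (2^j)"
    and "armijo f c1 x d (2^r) \<and> wolfe f c2 x d (2^r)"
  shows "ls_returns f c1 c2 x d (2^r)"
proof -
  have tr: "ls_trial f c1 c2 x d j = 2^j" if "j \<le> r" for j
    using ls_iter[OF assms(1) that] unfolding ls_trial_def by auto
  show ?thesis unfolding ls_returns_def
    by (rule exI[of _ r]) (use assms tr in auto)
qed

definition Dy :: "real set" where "Dy = (\<lambda>(m::int, k::nat). of_int m / 2^k) ` UNIV"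

lemma Dy_countable: "countable Dy" unfolding Dy_def by simp

lemma Dy_add: "p \<in> Dy \<Longrightarrow> q \<in> Dy \<Longrightarrow> p + q \<in> Dy"
proof -
  assume "p \<in> Dy" "q \<in> Dy"
  then obtain m k m' k' where p: "p = of_int m / 2^k" and q: "q = of_int m' / 2^k'"
    unfolding Dy_def by auto
  have "p + q = of_int (m * 2^k' + m' * 2^k) / 2^(k + k')"
    unfolding p q by (simp add: field_simps power_add)
  then show ?thesis unfolding Dy_def by (auto intro!: image_eqI[of _ _ "(m * 2^k' + m' * 2^k, k + k')"])
qed

lemma Dy_I: "p = of_int m / 2^k \<Longrightarrow> p \<in> Dy"
  unfolding Dy_def by (rule image_eqI[of _ _ "(m, k)"]) auto

lemma Dy_E: "p \<in> Dy \<Longrightarrow> (\<And>m k. p = of_int m / 2^k \<Longrightarrow> P) \<Longrightarrow> P"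
  unfolding Dy_def by auto

lemma Dy_neg: assumes "p \<in> Dy" shows "- p \<in> Dy"
proof -
  obtain m k where "p = of_int m / 2^k" using assms by (rule Dy_E)
  then show ?thesis by (intro Dy_I[of _ "- m" k]) simp
qed

lemma Dy_half: assumes "p \<in> Dy" shows "p / 2 \<in> Dy"
proof -
  obtain m k where "p = of_int m / 2^k" using assms by (rule Dy_E)
  then show ?thesis by (intro Dy_I[of _ m "Suc k"]) simp
qed

lemma Dy_double: assumes "p \<in> Dy" shows "2 * p \<in> Dy"
proof -
  obtain m k where "p = of_int m / 2^k" using assms by (rule Dy_E)
  then show ?thesis by (intro Dy_I[of _ "2 * m" k]) simp
qed

lemma Dy_0: "0 \<in> Dy" by (rule Dy_I[of _ 0 0]) simp
lemma Dy_1: "1 \<in> Dy" by (rule Dy_I[of _ 1 0]) simp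

definition okst :: "real \<times> real option \<times> real \<Rightarrow> bool" where
  "okst s \<longleftrightarrow> fst s \<in> Dy \<and> snd (snd s) \<in> Dy \<and> (\<forall>b. fst (snd s) = Some b \<longrightarrow> b \<in> Dy)"

lemma okst_step: "okst s \<Longrightarrow> okst (ls_step f c1 c2 x d s)"
  by (cases s) (auto simp: okst_def ls_step_def Let_def split: option.splits
      intro!: Dy_half Dy_double Dy_add)

lemma ls_trial_Dy: "ls_trial f c1 c2 x d j \<in> Dy"
proof -
  have "okst ((ls_step f c1 c2 x d ^^ j) (0, None, 1))"
  proof (induction j)
    case 0 show ?case by (simp add: okst_def Dy_0 Dy_1)
  next
    case (Suc j) then show ?case by (simp add: okst_step)
  qed
  then show ?thesis unfolding ls_trial_def okst_def by simp
qed

lemma main_step: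
  fixes x :: "real^'n::finite"
  assumes a: "a > 0" and c: "0 < c1" "c1 < c2" "c2 < 1"
    and am: "a^2 \<ge> real CARD('n) - 1"
    and tau: "c1 * a^2 + (real CARD('n) - 1) * (c1 - 1) \<le> 0"
    and u: "\<bar>x $ i1\<bar> > a"
    and nb: "\<forall>mm::int. \<bar>x $ i1\<bar> \<noteq> a * 2 powr mm"
  shows "ls_returns (fobj a i1) c1 c2 x (- grad (fobj a i1) x)
           (2 powr real_of_int \<lceil>log 2 (\<bar>x $ i1\<bar> / a)\<rceil>)"
proof -
  define q where "q = \<bar>x $ i1\<bar> / a"
  define l where "l = log 2 q"
  define r where "r = nat \<lceil>l\<rceil>"
  have q1: "q > 1" using u a unfolding q_def by simp
  have l0: "l > 0" unfolding l_def using q1 by simp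
  have rr: "real_of_int \<lceil>l\<rceil> = real r" unfolding r_def using l0 by simp
  have p2: "2 powr real_of_int \<lceil>l\<rceil> = 2^r" unfolding rr by (simp add: powr_realpow)
  have ql: "q = 2 powr l" unfolding l_def using q1 by simp
  have neq: "l \<noteq> real r"
  proof
    assume "l = real r"
    then have "q = 2 powr real_of_int \<lceil>l\<rceil>" using ql rr by simp
    then have "\<bar>x $ i1\<bar> = a * 2 powr real_of_int \<lceil>l\<rceil>" using a unfolding q_def by (simp add: field_simps)
    with nb show False by blast
  qed
  have "l \<le> real r" using rr le_of_int_ceiling[of l] by simp
  with neq have "l < real r" by simp
  then have qr: "q < 2^r" using ql by (simp add: powr_realpow[symmetric])
  have "real r - 1 < l" using rr ceiling_correct[of l] by linarith
  then have qr1: "2 powr (real r - 1) < q" using ql by simp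
  have low: "2^j < q" if "j < r" for j :: nat
  proof -
    have "(2::real)^j = 2 powr real j" by (simp add: powr_realpow)
    also have "\<dots> \<le> 2 powr (real r - 1)" using that by (intro powr_mono) auto
    finally show ?thesis using qr1 by simp
  qed
  have up: "(2::real)^r < 2 * q"
  proof -
    have "r \<ge> 1" using l0 \<open>l < real r\<close> by simp
    then have "(2::real)^r = 2 * 2 powr (real r - 1)"
      by (simp add: powr_realpow[symmetric] powr_diff)
    then show ?thesis using qr1 by simp
  qed
  note LF = line_facts[OF a c am tau u]
  have "ls_returns (fobj a i1) c1 c2 x (- grad (fobj a i1) x) (2^r)"
    apply (rule ls_ret)
    using LF(1) low unfolding q_def apply fastforce
    using LF(2) qr up unfolding q_def by blast
  then show ?thesis using p2 unfolding l_def q_def by simp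
qed

lemma traj:
  fixes x0 :: "real^'n::finite"
  assumes a: "a > 0" and g: "gd_upto (fobj a i1) c1 c2 x0 xs ts k"
  shows "j \<le> k \<Longrightarrow> \<exists>q\<in>Dy. xs j $ i1 = x0 $ i1 + a * q"
proof (induction j)
  case 0
  then show ?case using g Dy_0 unfolding gd_upto_def by auto
next
  case (Suc j)
  then obtain q where q: "q \<in> Dy" "xs j $ i1 = x0 $ i1 + a * q" by auto
  have jk: "j < k" using Suc.prems by simp
  have dif: "fobj a i1 differentiable (at (xs j))"
    and lr: "ls_returns (fobj a i1) c1 c2 (xs j) (- grad (fobj a i1) (xs j)) (ts j)"
    and nx: "xs (Suc j) = xs j + ts j *\<^sub>R (- grad (fobj a i1) (xs j))"
    using g jk unfolding gd_upto_def by auto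
  have ne: "xs j $ i1 \<noteq> 0" using not_diff[OF a] dif by blast
  have tD: "ts j \<in> Dy" using lr ls_trial_Dy unfolding ls_returns_def by metis
  have e: "xs (Suc j) $ i1 = x0 $ i1 + a * (q - ts j * sgn (xs j $ i1))"
  proof -
    have "xs (Suc j) $ i1 = xs j $ i1 - ts j * (a * sgn (xs j $ i1))"
      using nx grad_GG[OF ne, of a] by (simp add: GG_def)
    then show ?thesis using q(2) by (simp add: algebra_simps)
  qed
  have "q - ts j * sgn (xs j $ i1) \<in> Dy"
  proof (cases "xs j $ i1 > 0")
    case True
    then show ?thesis using Dy_add[OF q(1) Dy_neg[OF tD]] by simp
  next
    case False
    then have "sgn (xs j $ i1) = -1" using ne by (simp add: sgn_if)
    then show ?thesis using Dy_add[OF q(1) tD] by simp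
  qed
  then show ?case using e by blast
qed

theorem lemma3:
  fixes a c1 c2 :: real and i1 :: "'n::finite"
  assumes "CARD('n) \<ge> 2"
    and "a \<ge> sqrt (real CARD('n) - 1)"
    and "0 < c1" and "c1 < c2" and "c2 < 1"
    and "c1 + (real CARD('n) - 1) * (c1 - 1) / a\<^sup>2 \<le> 0"
  shows "AE x0 in std_gauss.
           \<forall>k xs ts. gd_upto (fobj a i1) c1 c2 x0 xs ts k \<and> \<bar>xs k $ i1\<bar> > a \<longrightarrow>
             ls_returns (fobj a i1) c1 c2 (xs k) (- grad (fobj a i1) (xs k))
               (2 powr real_of_int \<lceil>log 2 (\<bar>xs k $ i1\<bar> / a)\<rceil>)"
proof -
  define m where "m = real CARD('n) - 1"
  have m1: "m \<ge> 1" using assms(1) unfolding m_def by simp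
  have sq: "sqrt m \<ge> 1" using m1 by simp
  have a: "a > 0" using assms(2) sq unfolding m_def by linarith
  have am: "a^2 \<ge> real CARD('n) - 1"
  proof -
    have "(sqrt m)^2 \<le> a^2" using assms(2) sq unfolding m_def by (intro power_mono) auto
    then show ?thesis using m1 unfolding m_def by simp
  qed
  have tau: "c1 * a^2 + (real CARD('n) - 1) * (c1 - 1) \<le> 0"
  proof -
    have "(c1 + (real CARD('n) - 1) * (c1 - 1) / a\<^sup>2) * a^2 \<le> 0"
      using assms(6) by (simp add: mult_nonpos_nonneg)
    moreover have "(c1 + (real CARD('n) - 1) * (c1 - 1) / a\<^sup>2) * a^2 = c1 * a^2 + (real CARD('n) - 1) * (c1 - 1)"
      using a by (simp add: distrib_right)
    ultimately show ?thesis by simp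
  qed
  define Bad where "Bad = {v::real. \<exists>mm::int. \<bar>v\<bar> = a * 2 powr mm}"
  have cB: "countable Bad"
  proof (rule countable_subset)
    show "Bad \<subseteq> (\<lambda>(mm::int, b::bool). if b then a * 2 powr mm else - (a * 2 powr mm)) ` UNIV"
    proof
      fix v assume "v \<in> Bad"
      then obtain mm :: int where "\<bar>v\<bar> = a * 2 powr mm" unfolding Bad_def by auto
      then have "v = (if v \<ge> 0 then a * 2 powr mm else - (a * 2 powr mm))" by (auto simp: abs_if split: if_splits)
      then show "v \<in> (\<lambda>(mm::int, b::bool). if b then a * 2 powr mm else - (a * 2 powr mm)) ` UNIV"
        by (intro image_eqI[of _ _ "(mm, v \<ge> 0)"]) auto
    qed
  qed simp
  define C where "C = (\<lambda>(v, q). v - a * q) ` (Bad \<times> Dy)"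
  have cC: "countable C" unfolding C_def using cB Dy_countable by simp
  define N where "N = (\<Union>c\<in>C. {x::real^'n. x $ i1 = c})"
  have negN: "negligible N"
    unfolding N_def
  proof (rule negligible_countable_Union)
    show "countable ((\<lambda>c. {x::real^'n. x $ i1 = c}) ` C)" using cC by simp
    fix S assume "S \<in> (\<lambda>c. {x::real^'n. x $ i1 = c}) ` C"
    then obtain c where S: "S = {x::real^'n. x $ i1 = c}" by auto
    have "negligible {x::real^'n. x \<bullet> axis i1 1 = c}"
      by (rule negligible_standard_hyperplane) simp
    then show "negligible S" unfolding S by (simp add: cart_eq_inner_axis)
  qed
  have good: "\<forall>k xs ts. gd_upto (fobj a i1) c1 c2 x0 xs ts k \<and> \<bar>xs k $ i1\<bar> > a \<longrightarrow>
             ls_returns (fobj a i1) c1 c2 (xs k) (- grad (fobj a i1) (xs k))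
               (2 powr real_of_int \<lceil>log 2 (\<bar>xs k $ i1\<bar> / a)\<rceil>)" if x0: "x0 \<notin> N" for x0
  proof (intro allI impI, elim conjE)
    fix k xs ts assume g: "gd_upto (fobj a i1) c1 c2 x0 xs ts k" and u: "\<bar>xs k $ i1\<bar> > a"
    obtain q where q: "q \<in> Dy" "xs k $ i1 = x0 $ i1 + a * q" using traj[OF a g, of k] by auto
    have nb: "\<forall>mm::int. \<bar>xs k $ i1\<bar> \<noteq> a * 2 powr mm"
    proof (intro allI notI)
      fix mm :: int assume "\<bar>xs k $ i1\<bar> = a * 2 powr mm"
      then have "xs k $ i1 \<in> Bad" unfolding Bad_def by blast
      then have "xs k $ i1 - a * q \<in> C" unfolding C_def using q(1) by force
      then have "x0 \<in> N" unfolding N_def using q(2) by auto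
      with x0 show False by simp
    qed
    show "ls_returns (fobj a i1) c1 c2 (xs k) (- grad (fobj a i1) (xs k))
               (2 powr real_of_int \<lceil>log 2 (\<bar>xs k $ i1\<bar> / a)\<rceil>)"
      by (rule main_step[OF a assms(3,4,5) am tau u nb])
  qed
  have "AE x0 in lebesgue. x0 \<notin> N"
    by (rule AE_I'[of N]) (use negN negligible_iff_null_sets in auto)
  then have ae: "AE x0 in lborel. x0 \<notin> N" by (simp add: AE_completion_iff)
  have meas: "(\<lambda>x::real^'n. ennreal ((2 * pi) powr (- real CARD('n) / 2) * exp (- (norm x)\<^sup>2 / 2)))
      \<in> borel_measurable lborel" by measurable
  show ?thesis
    unfolding std_gauss_def
    using ae good by (subst AE_density[OF meas]) (auto elim: AE_mp)
qed

end
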